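(* Let $q=p^e$ with $p$ an odd prime and $e\ge1$, let $m\ge3$ be odd, $s\in\mathbb{F}_q^*$, $b\in\mathbb{F}_{q^m}^*$, and $l=\frac{e(p-1)(m+3)}{4}$. Let $N_s$ be the number of $x\in\mathbb{F}_{q^m}$ with $\mathrm{Tr}_{q^m/q}(bx)=s$ and $\mathrm{Tr}_{q^m/q}(x^2)=0$. Then $N_s=q^{m-2}$ if $\mathrm{Tr}_{q^m/q}(b^2)=0$, and $N_s=q^{m-2}-(-1)^l\eta(\mathrm{Tr}_{q^m/q}(b^2))q^{\frac{m-3}{2}}$ if $\mathrm{Tr}_{q^m/q}(b^2)\ne0$.
   Context: $\mathrm{Tr}_{q^m/q}$ is the trace map from $\mathbb{F}_{q^m}$ to $\mathbb{F}_q$; $\eta$ is the quadratic multiplicative character of $\mathbb{F}_q$. *)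

theory Defs
  imports Main "HOL-Computational_Algebra.Primes"
begin

text \<open>Model: the field F_{q^m} is a finite field type 'a with CARD('a) = q^m;
  F_q is its unique subfield {y. y^q = y}.\<close>

definition subfield_q :: "nat \<Rightarrow> 'a::field set" where
  "subfield_q q = {y. y ^ q = y}"

definition trace_qm :: "nat \<Rightarrow> nat \<Rightarrow> 'a::field \<Rightarrow> 'a" where
  "trace_qm q m x = (\<Sum>i<m. x ^ (q ^ i))"

definition eta_q :: "nat \<Rightarrow> 'a::field \<Rightarrow> int" where
  "eta_q q a = (if a = 0 then 0
               else if (\<exists>y \<in> subfield_q q. y ^ 2 = a) then 1 else -1)"

end

theory Submission
  imports Defs "Jordan_Normal_Form.Determinant" "HOL-Computational_Algebra.Polynomial"
begin

lemma of_nat_card_UNIV_zero: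
  "of_nat (card (UNIV::'a::{finite,ring_1} set)) = (0::'a)"
proof -
  have "(\<Sum>y\<in>(UNIV::'a set). 1 + y) = (\<Sum>y\<in>UNIV. y)"
    by (rule sum.reindex_bij_witness[of _ "\<lambda>y. y - 1" "\<lambda>y. 1 + y"]) auto
  then show ?thesis by (simp add: sum.distrib)
qed

locale ffq =
  fixes p e m q :: nat and K :: "'a::{finite,field} set"
  assumes p_prime: "prime p" and p_odd: "odd p" and e_pos: "e \<ge> 1" and q_def: "q = p^e"
    and m_pos: "m \<ge> 1" and cardF: "card (UNIV::'a set) = q^m"
    and K_def: "K = subfield_q q"
begin

lemma ofnat_p: "of_nat p = (0::'a)"
proof -
  have "of_nat (p^(e*m)) = (0::'a)" using of_nat_card_UNIV_zero[where 'a='a] cardF q_def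
    by (simp add: power_mult)
  hence "(of_nat p :: 'a)^(e*m) = 0" by simp
  thus ?thesis by simp
qed

lemma CHAR_p: "CHAR('a) = p"
proof -
  have "CHAR('a) dvd p" using ofnat_p of_nat_eq_0_iff_char_dvd by blast
  with p_prime have "CHAR('a) = 1 \<or> CHAR('a) = p" unfolding prime_nat_iff by blast
  thus ?thesis by auto
qed

lemma q_gt1: "q > 1"
proof -
  have "0 < e" using e_pos by simp
  from one_less_power[OF prime_gt_1_nat[OF p_prime] this] show ?thesis using q_def by simp
qed

lemma q_odd: "odd q" using q_def p_odd by simp

lemma frob_add: "(x + y :: 'a) ^ (q^i) = x^(q^i) + y^(q^i)"
  using freshmans_dream'[where m="q^i" and n="e*i" and x=x and y=y] CHAR_p p_prime q_def by (simp add: power_mult)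

lemma frob_sum: "(sum (f::'b \<Rightarrow> 'a) A) ^ (q^i) = (\<Sum>j\<in>A. f j ^ (q^i))"
  using freshmans_dream_sum'[where m="q^i" and n="e*i" and f=f and A=A] CHAR_p p_prime q_def by (simp add: power_mult)

lemma frob_neg: "(- x :: 'a) ^ (q^i) = - (x^(q^i))"
  using q_odd by (simp add: power_minus_odd)

lemma pow_card: "(x::'a) ^ (q^m) = x"
proof (cases "x = 0")
  case False
  have "x * (\<Prod>y\<in>UNIV-{0}. x * y) = x * x ^ (card (UNIV :: 'a set) - 1) * \<Prod>(UNIV-{0})"
    by (simp add: prod.distrib mult_ac)
  also have "x * x ^ (card (UNIV :: 'a set) - 1) = x ^ Suc (card (UNIV :: 'a set) - 1)"
    by (subst power_Suc) auto
  also have "Suc (card (UNIV :: 'a set) - 1) = card (UNIV :: 'a set)"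
    using finite_UNIV_card_ge_0[where ?'a = 'a] by simp
  also have "(\<Prod>y\<in>UNIV-{0}. x * y) = (\<Prod>y\<in>UNIV-{0}. y)"
    by (rule prod.reindex_bij_witness[of _ "\<lambda>y. y / x" "\<lambda>y. x * y"]) (use False in auto)
  finally show ?thesis
    using cardF by simp
qed (use q_gt1 in auto)

end

lemma card_fiber_additive:
  fixes f :: "'a::{finite,ab_group_add} \<Rightarrow> 'b::ab_group_add"
  assumes add: "\<And>x y. f (x + y) = f x + f y" and c: "c \<in> range f"
  shows "card {x. f x = c} = card {x. f x = 0}"
proof -
  obtain a where a: "f a = c" using c by auto
  have f0: "f 0 = 0" using add[of 0 0] by simp
  have fneg: "f (- x) = - f x" for x using neg_eq_iff_add_eq_0[of "f x" "f (-x)"] add[of x "-x"] f0 by simp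
  have "{x. f x = c} = (\<lambda>z. a + z) ` {x. f x = 0}"
  proof -
    { fix x assume "f x = c"
      hence "f (x - a) = 0" using add[of x "-a"] a fneg by simp
      hence "x \<in> (\<lambda>z. a + z) ` {x. f x = 0}" by (intro image_eqI[of _ _ "x - a"]) auto }
    then show ?thesis using add a by auto
  qed
  moreover have "inj (\<lambda>z::'a. a + z)" by (simp add: inj_on_def)
  ultimately show ?thesis by (simp add: card_image inj_on_subset)
qed

lemma card_range_kernel:
  fixes f :: "'a::{finite,ab_group_add} \<Rightarrow> 'b::ab_group_add"
  assumes add: "\<And>x y. f (x + y) = f x + f y"
  shows "card (UNIV::'a set) = card (range f) * card {x. f x = 0}"
proof -
  have "card (UNIV::'a set) = (\<Sum>x\<in>(UNIV::'a set). 1)" by simp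
  also have "\<dots> = (\<Sum>y\<in>range f. \<Sum>x\<in>{x \<in> UNIV. f x = y}. 1)"
    by (rule sum.group[symmetric]) auto
  also have "\<dots> = (\<Sum>y\<in>range f. card {x. f x = 0})"
    by (rule sum.cong) (auto simp: card_fiber_additive[OF add])
  finally show ?thesis by simp
qed

context ffq
begin

abbreviation Tr :: "'a \<Rightarrow> 'a" where "Tr \<equiv> trace_qm q m"

lemma K_mem: "x \<in> K \<longleftrightarrow> x ^ q = x" by (simp add: K_def subfield_q_def)

lemma K_pow: "x \<in> K \<Longrightarrow> x ^ (q ^ i) = x"
proof (induction i)
  case (Suc i)
  have "x ^ (q ^ Suc i) = (x ^ q) ^ (q ^ i)" by (simp add: power_mult[symmetric] mult.commute)
  also have "\<dots> = x" using Suc K_mem by simp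
  finally show ?case .
qed simp

lemma K_0[simp]: "0 \<in> K" using q_gt1 K_mem by simp
lemma K_1[simp]: "1 \<in> K" using K_mem by simp
lemma K_add: "x \<in> K \<Longrightarrow> y \<in> K \<Longrightarrow> x + y \<in> K"
  using frob_add[of x y 1] K_mem by simp
lemma K_mult: "x \<in> K \<Longrightarrow> y \<in> K \<Longrightarrow> x * y \<in> K"
  using K_mem by (simp add: power_mult_distrib)
lemma K_neg: "x \<in> K \<Longrightarrow> - x \<in> K"
  using frob_neg[of x 1] K_mem by simp
lemma K_diff: "x \<in> K \<Longrightarrow> y \<in> K \<Longrightarrow> x - y \<in> K"
  using K_add[of x "-y"] K_neg by simp
lemma K_inv: "x \<in> K \<Longrightarrow> inverse x \<in> K"
  using K_mem by (simp add: power_inverse)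
lemma K_div: "x \<in> K \<Longrightarrow> y \<in> K \<Longrightarrow> x / y \<in> K"
  using K_mult K_inv by (simp add: divide_inverse)
lemma K_pow2: "x \<in> K \<Longrightarrow> x ^ n \<in> K"
  by (induction n) (auto intro: K_mult)
lemma K_ofnat: "of_nat n \<in> K"
  by (induction n) (auto intro: K_add)

lemma Tr_add: "Tr (x + y) = Tr x + Tr y"
  unfolding trace_qm_def by (simp add: frob_add sum.distrib)
lemma Tr_neg: "Tr (- x) = - Tr x"
  unfolding trace_qm_def by (simp add: frob_neg sum_negf)
lemma Tr_diff: "Tr (x - y) = Tr x - Tr y"
  using Tr_add[of x "-y"] Tr_neg by simp
lemma Tr_0[simp]: "Tr 0 = 0"
  unfolding trace_qm_def using q_gt1 by (simp add: power_0_left)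
lemma Tr_scal: "c \<in> K \<Longrightarrow> Tr (c * x) = c * Tr x"
  unfolding trace_qm_def by (simp add: power_mult_distrib K_pow sum_distrib_left)

lemma Tr_in_K: "Tr x \<in> K"
proof -
  obtain n where n: "m = Suc n" using m_pos by (cases m) auto
  have "(Tr x) ^ q = (\<Sum>i<m. (x ^ q ^ i) ^ q)"
    unfolding trace_qm_def using frob_sum[of "\<lambda>i. x ^ q ^ i" "{..<m}" 1] by simp
  also have "\<dots> = (\<Sum>i<m. x ^ q ^ Suc i)"
    by (simp add: power_mult[symmetric] mult.commute)
  also have "\<dots> = (\<Sum>i<n. x ^ q ^ Suc i) + x ^ q ^ m" using n by simp
  also have "x ^ q ^ m = x ^ q ^ 0" using pow_card by simp
  also have "(\<Sum>i<n. x ^ q ^ Suc i) + x ^ q ^ 0 = Tr x"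
    unfolding trace_qm_def n sum.lessThan_Suc_shift by simp
  finally show ?thesis using K_mem by simp
qed

definition trpoly :: "'a poly" where "trpoly = (\<Sum>i<m. monom 1 (q ^ i))"

lemma poly_trpoly: "poly trpoly x = Tr x"
  unfolding trpoly_def trace_qm_def by (simp add: poly_sum poly_monom)

lemma trpoly_nz: "trpoly \<noteq> 0"
proof -
  have inj: "q ^ i = q ^ (m - 1) \<longleftrightarrow> i = m - 1" for i
    using q_gt1 by (simp add: power_inject_exp)
  have "coeff trpoly (q ^ (m - 1)) = (\<Sum>i<m. if q ^ i = q ^ (m - 1) then 1 else 0)"
    unfolding trpoly_def coeff_sum by simp
  also have "\<dots> = (\<Sum>i\<in>{m-1}. 1)"
    unfolding inj by (rule sum.mono_neutral_cong_right) (use m_pos in auto)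
  finally show ?thesis by auto
qed

lemma trpoly_deg: "degree trpoly \<le> q ^ (m - 1)"
  unfolding trpoly_def
proof (rule degree_sum_le)
  fix i assume "i \<in> {..<m}"
  hence "q ^ i \<le> q ^ (m - 1)" using q_gt1 by (intro power_increasing) auto
  thus "degree (monom (1::'a) (q ^ i)) \<le> q ^ (m - 1)" using degree_monom_le order_trans by blast
qed simp

lemma card_ker_le: "card {x. Tr x = 0} \<le> q ^ (m - 1)"
proof -
  have "card {x. Tr x = 0} = card {x. poly trpoly x = 0}" by (simp add: poly_trpoly)
  also have "\<dots> \<le> degree trpoly" by (rule card_poly_roots_bound[OF trpoly_nz])
  finally show ?thesis using trpoly_deg by simp
qed

lemma card_K_le: "card K \<le> q"
proof -
  let ?P = "monom (1::'a) q - [:0,1:]"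
  have cq: "coeff ?P q = 1" using q_gt1 by (simp add: coeff_pCons split: nat.split)
  hence nz: "?P \<noteq> 0" by (metis coeff_0 zero_neq_one)
  have "degree ?P \<le> q" using q_gt1
    by (intro degree_diff_le) (auto simp: degree_monom_le)
  moreover have "K = {x. poly ?P x = 0}" unfolding K_mem by (auto simp: K_mem poly_monom)
  ultimately show ?thesis using card_poly_roots_bound[OF nz] by simp
qed

lemma card_K_and_range:
  shows "card K = q" and "range Tr = K" and "card {x. Tr x = 0} = q ^ (m - 1)"
proof -
  have sub: "range Tr \<subseteq> K" using Tr_in_K by auto
  have r: "card (range Tr) \<le> q" using card_mono[OF _ sub] card_K_le by simp
  have k: "card {x. Tr x = 0} \<le> q ^ (m - 1)" by (rule card_ker_le)
  have eq: "card (range Tr) * card {x. Tr x = 0} = q * q ^ (m - 1)"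
  proof -
    have qm: "q ^ m = q * q ^ (m - 1)" using m_pos by (cases m) auto
    show ?thesis using card_range_kernel[of Tr, OF Tr_add] cardF qm by simp
  qed
  have qpos: "q > 0" "q ^ (m - 1) > 0" using q_gt1 by auto
  have "card (range Tr) = q"
  proof (rule ccontr)
    assume "card (range Tr) \<noteq> q"
    hence "card (range Tr) < q" using r by simp
    hence "card (range Tr) * card {x. Tr x = 0} < q * q ^ (m - 1)"
      using k qpos by (meson leD le_less_trans linorder_not_le mult_le_mono2 mult_less_cancel2 nat_mult_less_cancel1)
    thus False using eq by simp
  qed
  moreover then have "card {x. Tr x = 0} = q ^ (m - 1)" using eq qpos by simp
  moreover have "range Tr = K" using card_subset_eq[OF _ sub] card_K_le \<open>card (range Tr) = q\<close>
    by (metis card_mono finite le_antisym sub)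
  ultimately show "card K = q" "range Tr = K" "card {x. Tr x = 0} = q ^ (m - 1)" by auto
qed

lemma card_K: "card K = q" and range_Tr: "range Tr = K" and card_ker: "card {x. Tr x = 0} = q ^ (m - 1)"
  using card_K_and_range by auto

lemma card_Tr_fiber: "c \<in> K \<Longrightarrow> card {x. Tr x = c} = q ^ (m - 1)"
  using card_fiber_additive[of Tr c, OF Tr_add] range_Tr card_ker by simp

lemma card_Tr_b_fiber:
  assumes "b \<noteq> 0" "c \<in> K" shows "card {x. Tr (b * x) = c} = q ^ (m - 1)"
proof -
  have "{x. Tr (b * x) = c} = (\<lambda>y. y / b) ` {y. Tr y = c}"
    using assms by (auto simp: image_iff intro!: exI[of _ "b * _"])
  moreover have "inj (\<lambda>y::'a. y / b)" using assms by (simp add: inj_on_def)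
  ultimately show ?thesis using card_Tr_fiber[OF assms(2)] card_image[OF inj_on_subset[OF _ subset_UNIV]] by metis
qed

lemma nondeg: "x \<noteq> 0 \<Longrightarrow> \<exists>y. Tr (x * y) \<noteq> 0"
proof -
  assume x: "x \<noteq> 0"
  have "1 \<in> range Tr" using range_Tr by simp
  then obtain z where "Tr z = 1" by (auto simp: image_iff)
  thus ?thesis using x by (intro exI[of _ "z / x"]) simp
qed

end

context ffq
begin

abbreviation eta :: "'a \<Rightarrow> int" where "eta \<equiv> eta_q q"

definition issq :: "'a \<Rightarrow> bool" where "issq a \<longleftrightarrow> (\<exists>y\<in>K. y ^ 2 = a)"

lemma eta_def': "eta a = (if a = 0 then 0 else if issq a then 1 else -1)"
  unfolding eta_q_def issq_def K_def[symmetric] by simp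

lemma two_nz: "(2::'a) \<noteq> 0"
proof
  assume "(2::'a) = 0"
  hence "of_nat 2 = (0::'a)" by simp
  hence "p dvd 2" using of_nat_eq_0_iff_char_dvd CHAR_p by metis
  hence "p \<le> 2" by (simp add: dvd_imp_le)
  moreover have "p \<ge> 2" using prime_ge_2_nat[OF p_prime] .
  ultimately have "p = 2" by simp
  thus False using p_odd by simp
qed

lemma neg_ne: "x \<noteq> 0 \<Longrightarrow> x \<noteq> - (x::'a)"
proof
  assume "x \<noteq> 0" "x = - x"
  hence "2 * x = 0" by (metis add_eq_0_iff2 mult_2)
  thus False using two_nz \<open>x \<noteq> 0\<close> by simp
qed

lemma sq_count: assumes "a \<in> K" shows "int (card {y\<in>K. y ^ 2 = a}) = 1 + eta a"
proof (cases "a = 0")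
  case True
  hence "{y\<in>K. y ^ 2 = a} = {0}" by auto
  thus ?thesis using True by (simp add: eta_def')
next
  case False
  show ?thesis
  proof (cases "issq a")
    case True
    then obtain y0 where y0: "y0 \<in> K" "y0 ^ 2 = a" unfolding issq_def by auto
    have "y0 \<noteq> 0" using y0 False by auto
    have "{y\<in>K. y ^ 2 = a} = {y0, - y0}"
      using y0 K_neg by (auto simp: power2_eq_iff)
    moreover have "y0 \<noteq> - y0" using neg_ne \<open>y0 \<noteq> 0\<close> by simp
    ultimately show ?thesis using True False by (simp add: eta_def')
  next
    case False2: False
    hence "{y\<in>K. y ^ 2 = a} = {}" unfolding issq_def by auto
    thus ?thesis using False False2 by (simp add: eta_def')
  qed
qed

lemma eta_sum: "(\<Sum>a\<in>K. eta a) = 0"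
proof -
  have "(\<Sum>a\<in>K. int (card {y\<in>K. y ^ 2 = a})) = (\<Sum>a\<in>K. (\<Sum>y\<in>{y\<in>K. y ^ 2 = a}. 1))"
    by simp
  also have "\<dots> = (\<Sum>y\<in>K. 1)"
    by (rule sum.group) (auto intro: K_pow2)
  also have "\<dots> = int (card K)" by simp
  finally have "(\<Sum>a\<in>K. 1 + eta a) = int (card K)"
    using sq_count by (metis (no_types, lifting) sum.cong)
  thus ?thesis by (simp add: sum.distrib)
qed

definition SQ where "SQ = {a\<in>K. a \<noteq> 0 \<and> issq a}"
definition NSQ where "NSQ = {a\<in>K. a \<noteq> 0 \<and> \<not> issq a}"

lemma card_SQ_NSQ: "card SQ = card NSQ" and card_SQ_NSQ_sum: "card SQ + card NSQ = q - 1"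
proof -
  have K_split: "K = {0} \<union> SQ \<union> NSQ" unfolding SQ_def NSQ_def by auto
  have fin: "finite SQ" "finite NSQ" by auto
  have disj: "SQ \<inter> NSQ = {}" "0 \<notin> SQ" "0 \<notin> NSQ" unfolding SQ_def NSQ_def by auto
  have "(\<Sum>a\<in>K. eta a) = (\<Sum>a\<in>{0} \<union> SQ \<union> NSQ. eta a)"
    by (rule arg_cong[where f="sum eta"], rule K_split)
  also have "\<dots> = (\<Sum>a\<in>{0}. eta a) + (\<Sum>a\<in>SQ. eta a) + (\<Sum>a\<in>NSQ. eta a)"
    using fin disj by (simp add: sum.union_disjoint)
  also have "\<dots> = int (card SQ) - int (card NSQ)"
    by (simp add: eta_def' SQ_def NSQ_def)
  finally show "card SQ = card NSQ" using eta_sum by simp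
  have "card K = card ({0} \<union> SQ \<union> NSQ)"
    by (rule arg_cong[where f="card"], rule K_split)
  also have "\<dots> = 1 + card SQ + card NSQ"
    using fin disj by (simp add: card_Un_disjoint)
  finally have "card K = 1 + card SQ + card NSQ" .
  thus "card SQ + card NSQ = q - 1" using card_K by simp
qed

lemma issq_mult: "issq a \<Longrightarrow> issq b \<Longrightarrow> issq (a * b)"
  unfolding issq_def by (metis K_mult power_mult_distrib)

lemma issq_div: "issq a \<Longrightarrow> issq (a * b) \<Longrightarrow> a \<noteq> 0 \<Longrightarrow> issq b"
proof -
  assume "issq a" "issq (a * b)" "a \<noteq> 0"
  then obtain y z where yz: "y \<in> K" "y ^ 2 = a" "z \<in> K" "z ^ 2 = a * b" unfolding issq_def by auto
  hence "y \<noteq> 0" using \<open>a \<noteq> 0\<close> by auto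
  have "(z / y) ^ 2 = b" using yz \<open>y \<noteq> 0\<close> \<open>a \<noteq> 0\<close> by (simp add: power_divide)
  thus "issq b" unfolding issq_def using yz K_div by blast
qed

lemma nsq_nsq:
  assumes a: "a \<in> NSQ" and b: "b \<in> NSQ" shows "issq (a * b)"
proof (rule ccontr)
  assume nab: "\<not> issq (a * b)"
  have img: "(\<lambda>y. a * y) ` SQ \<subseteq> NSQ"
  proof
    fix x assume "x \<in> (\<lambda>y. a * y) ` SQ"
    then obtain y where y: "y \<in> SQ" "x = a * y" by auto
    have "\<not> issq x"
    proof
      assume "issq x"
      hence "issq (y * a)" using y by (simp add: mult.commute)
      hence "issq a" using issq_div y unfolding SQ_def by blast
      thus False using a unfolding NSQ_def by simp
    qed
    thus "x \<in> NSQ" using y a unfolding SQ_def NSQ_def by (auto intro: K_mult)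
  qed
  have inj: "inj_on (\<lambda>y. a * y) SQ" using a unfolding NSQ_def by (auto simp: inj_on_def)
  have "(\<lambda>y. a * y) ` SQ = NSQ"
    using card_subset_eq[OF _ img] card_image[OF inj] card_SQ_NSQ by simp
  moreover have "a * b \<in> NSQ" using a b nab unfolding NSQ_def by (auto intro: K_mult)
  ultimately have "a * b \<in> (\<lambda>y. a * y) ` SQ" by simp
  then obtain y where "y \<in> SQ" "a * b = a * y" by blast
  hence "b = y" using a unfolding NSQ_def by simp
  thus False using b \<open>y \<in> SQ\<close> unfolding SQ_def NSQ_def by simp
qed

lemma eta_mult: assumes "a \<in> K" "b \<in> K" shows "eta (a * b) = eta a * eta b"
proof (cases "a = 0 \<or> b = 0")
  case True thus ?thesis by (auto simp: eta_def')
next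
  case False
  hence nz: "a \<noteq> 0" "b \<noteq> 0" "a * b \<noteq> 0" by auto
  show ?thesis
  proof (cases "issq a"; cases "issq b")
    assume "issq a" "issq b" thus ?thesis using nz issq_mult by (simp add: eta_def')
  next
    assume "issq a" "\<not> issq b"
    moreover hence "\<not> issq (a * b)" using nz issq_div[of a b] by blast
    ultimately show ?thesis using nz by (simp add: eta_def')
  next
    assume "\<not> issq a" "issq b"
    moreover hence "\<not> issq (a * b)" using nz issq_div[of b a] by (metis mult.commute)
    ultimately show ?thesis using nz by (simp add: eta_def')
  next
    assume "\<not> issq a" "\<not> issq b"
    hence "issq (a * b)" using nsq_nsq assms nz unfolding NSQ_def by blast
    thus ?thesis using nz \<open>\<not> issq a\<close> \<open>\<not> issq b\<close> by (simp add: eta_def')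
  qed
qed

lemma eta_sq_nz: "c \<in> K \<Longrightarrow> c \<noteq> 0 \<Longrightarrow> eta (c ^ 2) = 1"
  unfolding eta_def' issq_def by auto

lemma eta_pm: "a \<noteq> 0 \<Longrightarrow> eta a = 1 \<or> eta a = -1"
  by (simp add: eta_def')

lemma eta_sq_val: "a \<noteq> 0 \<Longrightarrow> eta a * eta a = 1"
  by (simp add: eta_def')

lemma eta_0[simp]: "eta 0 = 0" by (simp add: eta_def')

lemma sum_sq:
  fixes f :: "'a \<Rightarrow> int"
  shows "(\<Sum>y\<in>K. f (y ^ 2)) = (\<Sum>w\<in>K. (1 + eta w) * f w)"
proof -
  have "(\<Sum>y\<in>K. f (y ^ 2)) = (\<Sum>w\<in>K. of_nat (card {y\<in>K. y ^ 2 = w}) * f w)"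
    by (rule sum_fun_comp) (auto intro: K_pow2)
  also have "\<dots> = (\<Sum>w\<in>K. (1 + eta w) * f w)"
    by (rule sum.cong) (simp_all add: sq_count)
  finally show ?thesis .
qed

lemma sum_lin:
  assumes "a \<in> K" "a \<noteq> 0" "c \<in> K"
  shows "(\<Sum>w\<in>K. g (c - a * w)) = (\<Sum>u\<in>K. g u)"
  by (rule sum.reindex_bij_witness[of _ "\<lambda>u. (c - u) / a" "\<lambda>w. c - a * w"])
     (use assms in \<open>auto intro: K_diff K_mult K_div\<close>)

lemma eta_sum_lin:
  assumes "a \<in> K" "a \<noteq> 0" "c \<in> K"
  shows "(\<Sum>w\<in>K. eta (c - a * w)) = 0"
  using sum_lin[OF assms, of eta] eta_sum by simp

lemma jac_nz:
  assumes a: "a \<in> K" "a \<noteq> 0" and c: "c \<in> K" "c \<noteq> 0"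
  shows "(\<Sum>w\<in>K. eta w * eta (c - a * w)) = - eta (- a)"
proof -
  have "(\<Sum>w\<in>K. eta w * eta (c - a * w)) = (\<Sum>w\<in>K - {0}. eta w * eta (c - a * w))"
    by (rule sum.mono_neutral_right) auto
  also have "\<dots> = (\<Sum>w\<in>K - {0}. eta (c / w - a))"
  proof (rule sum.cong)
    fix w assume w: "w \<in> K - {0}"
    have "eta w * eta (c - a * w) = eta (w * (c - a * w))"
      using w a c by (simp add: eta_mult K_diff K_mult)
    also have "w * (c - a * w) = w ^ 2 * (c / w - a)" using w by (simp add: field_simps power2_eq_square)
    also have "eta \<dots> = eta (w ^ 2) * eta (c / w - a)"
      using w a c by (intro eta_mult) (auto intro: K_pow2 K_diff K_div)
    also have "eta (w ^ 2) = 1" using w eta_sq_nz by simp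
    finally show "eta w * eta (c - a * w) = eta (c / w - a)" by simp
  qed simp
  also have "\<dots> = (\<Sum>u\<in>K - {0}. eta (u - a))"
    by (rule sum.reindex_bij_witness[of _ "\<lambda>u. c / u" "\<lambda>w. c / w"]) (use c in \<open>auto intro: K_div\<close>)
  also have "\<dots> = (\<Sum>u\<in>K. eta (u - a)) - eta (0 - a)"
    by (simp add: sum_diff1)
  also have "(\<Sum>u\<in>K. eta (u - a)) = 0"
    using eta_sum_lin[of "-1" "-a"] a K_neg K_1 by simp
  finally show ?thesis by simp
qed

lemma jac_0:
  assumes a: "a \<in> K" "a \<noteq> 0"
  shows "(\<Sum>w\<in>K. eta w * eta (0 - a * w)) = eta (- a) * (int q - 1)"
proof -
  have "(\<Sum>w\<in>K. eta w * eta (0 - a * w)) = (\<Sum>w\<in>K - {0}. eta w * eta (0 - a * w))"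
    by (rule sum.mono_neutral_right) auto
  also have "\<dots> = (\<Sum>w\<in>K - {0}. eta (- a))"
  proof (rule sum.cong)
    fix w assume w: "w \<in> K - {0}"
    have "0 - a * w = (- a) * w" by simp
    moreover have "eta ((- a) * w) = eta (- a) * eta w" using w a by (intro eta_mult) (auto intro: K_neg)
    ultimately have "eta (0 - a * w) = eta (- a) * eta w" by simp
    thus "eta w * eta (0 - a * w) = eta (- a)" using eta_sq_val[of w] w by (simp add: mult_ac)
  qed simp
  also have "\<dots> = eta (- a) * (int q - 1)" using card_K q_gt1 by (simp add: of_nat_diff)
  finally show ?thesis .
qed

end

fun cnt :: "'a::field set \<Rightarrow> 'a list \<Rightarrow> 'a \<Rightarrow> nat" where
  "cnt K [] c = (if c = 0 then 1 else 0)"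
| "cnt K (a # as) c = (\<Sum>y\<in>K. cnt K as (c - a * y ^ 2))"

context ffq
begin

definition hq where "hq = (q - 1) div 2"

lemma two_hq: "2 * hq = q - 1" using q_odd unfolding hq_def by simp

lemma hq_pos: "hq \<ge> 1"
proof -
  have "q \<noteq> 2" using q_odd by auto
  hence "q \<ge> 3" using q_gt1 by arith
  thus ?thesis unfolding hq_def by simp
qed

lemma card_SQ: "card SQ = hq"
  using card_SQ_NSQ card_SQ_NSQ_sum two_hq by simp

lemma sq_pow_half: "a \<in> SQ \<Longrightarrow> a ^ hq = 1"
proof -
  assume "a \<in> SQ"
  then obtain y where y: "y \<in> K" "y ^ 2 = a" "a \<noteq> 0" unfolding SQ_def issq_def by auto
  hence "y \<noteq> 0" by auto
  have "y * y ^ (q - 1) = y ^ Suc (q - 1)" by simp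
  also have "Suc (q - 1) = q" using q_gt1 by simp
  finally have "y * y ^ (q - 1) = y * 1" using y K_mem by simp
  hence "y ^ (q - 1) = 1" using \<open>y \<noteq> 0\<close> by simp
  moreover have "a ^ hq = y ^ (2 * hq)" using y by (simp add: power_mult)
  ultimately show "a ^ hq = 1" using two_hq by simp
qed

lemma nsq_pow_half: "a \<in> NSQ \<Longrightarrow> a ^ hq \<noteq> 1"
proof
  assume a: "a \<in> NSQ" "a ^ hq = 1"
  let ?P = "monom (1::'a) hq - 1"
  have "coeff ?P hq = 1" using hq_pos by simp
  hence nz: "?P \<noteq> 0" by (metis coeff_0 zero_neq_one)
  have deg: "degree ?P \<le> hq" by (intro degree_diff_le) (auto simp: degree_monom_le)
  have "insert a SQ \<subseteq> {x. poly ?P x = 0}" using a sq_pow_half by (auto simp: poly_monom)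
  hence "card (insert a SQ) \<le> card {x. poly ?P x = 0}"
    by (intro card_mono) (auto intro: poly_roots_finite[OF nz])
  also have "\<dots> \<le> hq" using card_poly_roots_bound[OF nz] deg by simp
  also have "card (insert a SQ) = hq + 1"
    using a card_SQ unfolding SQ_def NSQ_def by (simp add: card_insert_if)
  finally show False by simp
qed

lemma eta_m1: "eta (-1) = (-1) ^ hq"
proof (cases "even hq")
  case True
  hence "(-1::'a) ^ hq = 1" by simp
  hence "-1 \<notin> NSQ" using nsq_pow_half by blast
  hence "issq (-1)" unfolding NSQ_def using K_neg[OF K_1] by auto
  thus ?thesis using True by (simp add: eta_def')
next
  case False
  hence "(-1::'a) ^ hq = -1" by simp
  moreover have "(-1::'a) \<noteq> 1" using neg_ne[of 1] by auto
  ultimately have "-1 \<notin> SQ" using sq_pow_half by auto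
  hence "\<not> issq (-1)" unfolding SQ_def using K_neg[OF K_1] by auto
  thus ?thesis using False by (simp add: eta_def')
qed

lemma cnt1:
  assumes a: "a \<in> K" "a \<noteq> 0" and u: "u \<in> K"
  shows "int (cnt K [a] u) = 1 + eta (u * a)"
proof -
  have "int (cnt K [a] u) = (\<Sum>y\<in>K. (\<lambda>w. if u - a * w = 0 then 1 else 0) (y ^ 2))"
    by (auto simp: of_nat_sum intro!: sum.cong)
  also have "\<dots> = (\<Sum>w\<in>K. (1 + eta w) * (if u - a * w = 0 then 1 else 0))"
    by (rule sum_sq)
  also have "\<dots> = (\<Sum>w\<in>K. if w = u / a then 1 + eta w else 0)"
    by (rule sum.cong) (use a in \<open>auto simp: field_simps\<close>)
  also have "\<dots> = 1 + eta (u / a)" using u a K_div by simp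
  also have "u / a = (u * a) * (inverse a) ^ 2" using a by (simp add: field_simps power2_eq_square)
  also have "eta \<dots> = eta (u * a) * eta ((inverse a) ^ 2)"
    using u a by (intro eta_mult) (auto intro: K_mult K_pow2 K_inv)
  also have "eta ((inverse a) ^ 2) = 1" using a by (intro eta_sq_nz) (auto intro: K_inv)
  finally show ?thesis by simp
qed

lemma cnt2:
  assumes a: "a \<in> K" "a \<noteq> 0" and b: "b \<in> K" "b \<noteq> 0" and c: "c \<in> K"
  shows "int (cnt K [a, b] c) = int q + eta (- (a * b)) * (if c = 0 then int q - 1 else -1)"
proof -
  have "int (cnt K [a, b] c) = (\<Sum>y\<in>K. int (cnt K [b] (c - a * y ^ 2)))"
    by (subst cnt.simps(2)) (simp only: of_nat_sum)
  also have "\<dots> = (\<Sum>y\<in>K. 1 + eta b * eta (c - a * y ^ 2))"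
  proof (rule sum.cong)
    fix y assume y: "y \<in> K"
    have u: "c - a * y ^ 2 \<in> K" using y a c by (auto intro: K_diff K_mult K_pow2)
    show "int (cnt K [b] (c - a * y ^ 2)) = 1 + eta b * eta (c - a * y ^ 2)"
      using cnt1[OF b u] eta_mult[OF u b(1)] by (simp add: mult.commute)
  qed simp
  also have "\<dots> = int q + eta b * (\<Sum>y\<in>K. (\<lambda>w. eta (c - a * w)) (y ^ 2))"
    using card_K by (simp add: sum.distrib sum_distrib_left)
  also have "(\<Sum>y\<in>K. (\<lambda>w. eta (c - a * w)) (y ^ 2)) = (\<Sum>w\<in>K. (1 + eta w) * eta (c - a * w))"
    by (rule sum_sq)
  also have "\<dots> = (\<Sum>w\<in>K. eta (c - a * w)) + (\<Sum>w\<in>K. eta w * eta (c - a * w))"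
    by (simp add: distrib_right sum.distrib)
  also have "(\<Sum>w\<in>K. eta (c - a * w)) = 0" using eta_sum_lin a c by simp
  finally have main: "int (cnt K [a, b] c) = int q + eta b * (0 + (\<Sum>w\<in>K. eta w * eta (c - a * w)))" .
  have E: "eta (- (a * b)) = eta (- a) * eta b"
    using eta_mult[of "-a" b] a b K_neg by simp
  show ?thesis
  proof (cases "c = 0")
    case True
    have "(\<Sum>w\<in>K. eta w * eta (c - a * w)) = eta (- a) * (int q - 1)" using jac_0[OF a] True by simp
    thus ?thesis using True main E by (simp add: mult_ac)
  next
    case False
    have "(\<Sum>w\<in>K. eta w * eta (c - a * w)) = - eta (- a)" using jac_nz[OF a c False] .
    thus ?thesis using False main E by (simp add: mult_ac)
  qed
qed

lemma prod_list_K: "set as \<subseteq> K \<Longrightarrow> prod_list as \<in> K"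
  by (induction as) (auto intro: K_mult)

lemma cnt_even:
  "length as = 2 * k \<Longrightarrow> k \<ge> 1 \<Longrightarrow> set as \<subseteq> K - {0} \<Longrightarrow> c \<in> K \<Longrightarrow>
   int (cnt K as c) = int q ^ (2 * k - 1) + eta ((-1) ^ k * prod_list as) * (if c = 0 then int q - 1 else -1) * int q ^ (k - 1)"
proof (induction k arbitrary: as c)
  case 0 thus ?case by simp
next
  case (Suc k)
  then obtain a b rest where as: "as = a # b # rest" "length rest = 2 * k"
    by (metis Suc_length_conv mult_Suc_right add_2_eq_Suc)
  have a: "a \<in> K" "a \<noteq> 0" and b: "b \<in> K" "b \<noteq> 0" and rest: "set rest \<subseteq> K - {0}"
    using Suc.prems as by auto
  show ?case
  proof (cases "k = 0")
    case True
    hence "rest = []" using as by simp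
    thus ?thesis using cnt2[OF a b Suc.prems(4)] as True by simp
  next
    case False
    hence k1: "k \<ge> 1" by simp
    define A where "A = int q ^ (2 * k - 1)"
    define B where "B = eta ((-1) ^ k * prod_list rest) * int q ^ (k - 1)"
    have S: "int (cnt K as c) = (\<Sum>y\<in>K. \<Sum>z\<in>K. int (cnt K rest (c - a * y ^ 2 - b * z ^ 2)))"
      using as by (simp add: of_nat_sum)
    also have "\<dots> = (\<Sum>y\<in>K. \<Sum>z\<in>K. (A - B) + B * int q * (if c - a * y ^ 2 - b * z ^ 2 = 0 then 1 else 0))"
    proof (intro sum.cong refl)
      fix y z assume yz: "y \<in> K" "z \<in> K"
      have u: "c - a * y ^ 2 - b * z ^ 2 \<in> K" using yz a b Suc.prems(4) by (auto intro!: K_diff K_mult K_pow2)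
      show "int (cnt K rest (c - a * y ^ 2 - b * z ^ 2)) = (A - B) + B * int q * (if c - a * y ^ 2 - b * z ^ 2 = 0 then 1 else 0)"
        using Suc.IH[OF as(2) k1 rest u] unfolding A_def B_def by (simp add: algebra_simps)
    qed
    also have "\<dots> = int q * int q * (A - B) + B * int q * (\<Sum>y\<in>K. \<Sum>z\<in>K. (if c - a * y ^ 2 - b * z ^ 2 = 0 then 1 else 0))"
      using card_K by (simp add: sum.distrib sum_distrib_left)
    also have "(\<Sum>y\<in>K. \<Sum>z\<in>K. (if c - a * y ^ 2 - b * z ^ 2 = 0 then 1 else 0)) = int (cnt K [a, b] c)"
      by (auto simp: of_nat_sum intro!: sum.cong)
    also have "\<dots> = int q + eta (- (a * b)) * (if c = 0 then int q - 1 else -1)"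
      by (rule cnt2[OF a b Suc.prems(4)])
    finally have main: "int (cnt K as c) = int q * int q * (A - B) + B * int q * (int q + eta (- (a * b)) * (if c = 0 then int q - 1 else -1))" .
    have "prod_list rest \<in> K" using rest by (intro prod_list_K) auto
    hence PK: "(-1) ^ k * prod_list rest \<in> K" by (rule K_mult[OF K_pow2[OF K_neg[OF K_1]]])
    have E: "eta ((-1) ^ k * prod_list rest) * eta (- (a * b)) = eta ((-1) ^ Suc k * prod_list as)"
    proof -
      have "eta ((-1) ^ k * prod_list rest) * eta (- (a * b)) = eta (((-1) ^ k * prod_list rest) * (- (a * b)))"
        using PK a b by (intro eta_mult[symmetric]) (auto intro: K_mult K_neg)
      also have "((-1) ^ k * prod_list rest) * (- (a * b)) = (-1) ^ Suc k * prod_list as"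
        using as by (simp add: algebra_simps)
      finally show ?thesis .
    qed
    have Q1: "int q * int q * A = int q ^ (2 * Suc k - 1)"
    proof -
      have "2 * Suc k - 1 = Suc (Suc (2 * k - 1))" using k1 by simp
      hence "int q ^ (2 * Suc k - 1) = int q * (int q * int q ^ (2 * k - 1))" by (simp only: power_Suc)
      thus ?thesis unfolding A_def by (metis mult.assoc)
    qed
    have Q2: "int q * int q ^ (k - 1) = int q ^ (Suc k - 1)"
    proof -
      have "Suc k - 1 = Suc (k - 1)" using k1 by simp
      thus ?thesis by (simp only: power_Suc)
    qed
    have "int (cnt K as c) = int q * int q * A + (eta ((-1) ^ k * prod_list rest) * eta (- (a * b))) * (if c = 0 then int q - 1 else -1) * (int q * int q ^ (k - 1))"
      unfolding main B_def by (simp add: algebra_simps)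
    thus ?thesis unfolding Q1 Q2 E .
  qed
qed

end

context ffq
begin

definition subsp :: "'a set \<Rightarrow> bool" where
  "subsp W \<longleftrightarrow> 0 \<in> W \<and> (\<forall>x\<in>W. \<forall>y\<in>W. x + y \<in> W) \<and> (\<forall>c\<in>K. \<forall>x\<in>W. c * x \<in> W)"

definition nondegW :: "'a set \<Rightarrow> bool" where
  "nondegW W \<longleftrightarrow> (\<forall>x\<in>W. (\<forall>y\<in>W. Tr (x * y) = 0) \<longrightarrow> x = 0)"

definition orth :: "'a list \<Rightarrow> bool" where
  "orth ws \<longleftrightarrow> (\<forall>i<length ws. \<forall>j<length ws. i \<noteq> j \<longrightarrow> Tr (ws ! i * ws ! j) = 0)"

lemma Tr_two: "Tr (2 * x) = 2 * Tr x"
  by (simp only: mult_2 Tr_add)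

lemma Q_add: "Tr ((x + y) ^ 2) = Tr (x ^ 2) + 2 * Tr (x * y) + Tr (y ^ 2)"
proof -
  have "(x + y) ^ 2 = x ^ 2 + 2 * (x * y) + y ^ 2" by (simp add: power2_eq_square algebra_simps)
  thus ?thesis by (simp add: Tr_add Tr_two)
qed

lemma subsp_neg: "subsp W \<Longrightarrow> x \<in> W \<Longrightarrow> - x \<in> W"
  unfolding subsp_def using K_neg[OF K_1] by (metis mult_minus1)

lemma subsp_diff: "subsp W \<Longrightarrow> x \<in> W \<Longrightarrow> y \<in> W \<Longrightarrow> x - y \<in> W"
  using subsp_neg[of W y] unfolding subsp_def by (metis diff_conv_add_uminus)

lemma aniso_exists:
  assumes W: "subsp W" "nondegW W" and ne: "\<exists>x\<in>W. x \<noteq> 0"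
  shows "\<exists>w\<in>W. Tr (w ^ 2) \<noteq> 0"
proof (rule ccontr)
  assume "\<not> ?thesis"
  hence Z: "\<forall>w\<in>W. Tr (w ^ 2) = 0" by simp
  obtain x where x: "x \<in> W" "x \<noteq> 0" using ne by auto
  then obtain y where y: "y \<in> W" "Tr (x * y) \<noteq> 0" using W unfolding nondegW_def by blast
  have "x + y \<in> W" using W x y unfolding subsp_def by auto
  hence "2 * Tr (x * y) = 0" using Q_add[of x y] Z x y by simp
  thus False using two_nz y by simp
qed

context
  fixes W w
  assumes W: "subsp W" "nondegW W" and w: "w \<in> W" "Tr (w ^ 2) \<noteq> 0"
begin

definition "W' = {y\<in>W. Tr (w * y) = 0}"

definition "aw = Tr (w ^ 2)"

lemma aw_K: "aw \<in> K" unfolding aw_def by (rule Tr_in_K)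

lemma mu_K: "Tr (w * x) / aw \<in> K" using aw_K Tr_in_K K_div by blast

lemma decomp: "x \<in> W \<Longrightarrow> x - (Tr (w * x) / aw) * w \<in> W'"
proof -
  assume x: "x \<in> W"
  let ?mu = "Tr (w * x) / aw"
  have "?mu * w \<in> W" using W w mu_K[of x] unfolding subsp_def by blast
  hence "x - ?mu * w \<in> W" using subsp_diff W x by blast
  moreover have "Tr (w * (x - ?mu * w)) = 0"
  proof -
    have e: "w * (x - ?mu * w) = w * x - ?mu * (w ^ 2)" by (simp add: algebra_simps power2_eq_square)
    have "Tr (w * (x - ?mu * w)) = Tr (w * x) - ?mu * aw"
      by (subst e, simp only: Tr_diff Tr_scal[OF mu_K], simp add: aw_def)
    moreover have "aw \<noteq> 0" using w(2) aw_def by simp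
    ultimately show ?thesis by simp
  qed
  ultimately show ?thesis unfolding W'_def by simp
qed

lemma subsp_W': "subsp W'"
  using W unfolding subsp_def W'_def by (auto simp: distrib_left Tr_add mult.left_commute Tr_scal)

lemma nondeg_W': "nondegW W'"
  unfolding nondegW_def
proof (intro ballI impI)
  fix y assume y: "y \<in> W'" and orth: "\<forall>z\<in>W'. Tr (y * z) = 0"
  have "\<forall>x\<in>W. Tr (y * x) = 0"
  proof
    fix x assume x: "x \<in> W"
    let ?mu = "Tr (w * x) / aw"
    have "Tr (y * (x - ?mu * w)) = 0" using orth decomp[OF x] by blast
    moreover have e: "y * x = y * (x - ?mu * w) + ?mu * (w * y)" by (simp add: algebra_simps)
    have "Tr (y * x) = Tr (y * (x - ?mu * w)) + ?mu * Tr (w * y)"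
      by (subst e, simp only: Tr_add Tr_scal[OF mu_K])
    moreover have "Tr (w * y) = 0" using y unfolding W'_def by simp
    ultimately show "Tr (y * x) = 0" by simp
  qed
  thus "y = 0" using W y unfolding nondegW_def W'_def by blast
qed

definition "phi = (\<lambda>(l, y). l * w + y)"

lemma phi_Q: "l \<in> K \<Longrightarrow> y \<in> W' \<Longrightarrow> Tr ((phi (l, y)) ^ 2) = aw * l ^ 2 + Tr (y ^ 2)"
proof -
  assume l: "l \<in> K" and y: "y \<in> W'"
  have "Tr ((l * w + y) ^ 2) = Tr ((l * w) ^ 2) + 2 * Tr (l * w * y) + Tr (y ^ 2)" by (rule Q_add)
  also have "Tr (l * w * y) = l * Tr (w * y)" using l by (simp add: Tr_scal mult.assoc)
  also have "Tr (w * y) = 0" using y unfolding W'_def by simp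
  also have "Tr ((l * w) ^ 2) = l ^ 2 * aw" using l K_pow2 by (simp add: power_mult_distrib Tr_scal aw_def)
  finally show ?thesis by (simp add: phi_def mult.commute)
qed

lemma phi_bij: "bij_betw phi (K \<times> W') W"
proof (rule bij_betw_byWitness[where f' = "\<lambda>x. (Tr (w * x) / aw, x - (Tr (w * x) / aw) * w)"])
  show "\<forall>a\<in>K \<times> W'. (Tr (w * phi a) / aw, phi a - Tr (w * phi a) / aw * w) = a"
  proof
    fix a assume a: "a \<in> K \<times> W'"
    then obtain l y where ly: "a = (l, y)" "l \<in> K" "y \<in> W'" by auto
    have "Tr (w * phi a) = l * aw"
    proof -
      have "w * phi a = l * w ^ 2 + w * y" using ly by (simp add: phi_def algebra_simps power2_eq_square)
      thus ?thesis using ly unfolding W'_def by (simp add: Tr_add Tr_scal aw_def mult.commute)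
    qed
    hence "Tr (w * phi a) / aw = l" using w(2) aw_def by simp
    thus "(Tr (w * phi a) / aw, phi a - Tr (w * phi a) / aw * w) = a" using ly by (simp add: phi_def)
  qed
  show "\<forall>a'\<in>W. phi (Tr (w * a') / aw, a' - Tr (w * a') / aw * w) = a'" by (simp add: phi_def)
  show "phi ` (K \<times> W') \<subseteq> W"
  proof
    fix x assume "x \<in> phi ` (K \<times> W')"
    then obtain l y where "x = l * w + y" "l \<in> K" "y \<in> W'" by (auto simp: phi_def)
    thus "x \<in> W" using W w unfolding subsp_def W'_def by auto
  qed
  show "(\<lambda>x. (Tr (w * x) / aw, x - Tr (w * x) / aw * w)) ` W \<subseteq> K \<times> W'"
    using decomp mu_K by auto
qed

lemma card_W': "card W = q * card W'"
  using bij_betw_same_card[OF phi_bij] card_K by (simp add: card_cartesian_product)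

lemma count_W: "card {x\<in>W. Tr (x ^ 2) = c} = (\<Sum>l\<in>K. card {y\<in>W'. Tr (y ^ 2) = c - aw * l ^ 2})"
proof -
  have "{x\<in>W. Tr (x ^ 2) = c} = phi ` (SIGMA l:K. {y\<in>W'. Tr (y ^ 2) = c - aw * l ^ 2})"
  proof
    show "{x\<in>W. Tr (x ^ 2) = c} \<subseteq> phi ` (SIGMA l:K. {y\<in>W'. Tr (y ^ 2) = c - aw * l ^ 2})"
    proof
      fix x assume x: "x \<in> {x\<in>W. Tr (x ^ 2) = c}"
      have "x \<in> phi ` (K \<times> W')" using phi_bij x unfolding bij_betw_def by auto
      then obtain a where a: "a \<in> K \<times> W'" "x = phi a" by blast
      then obtain l y where ly: "a = (l, y)" "l \<in> K" "y \<in> W'" by auto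
      have "aw * l ^ 2 + Tr (y ^ 2) = c" using phi_Q[OF ly(2,3)] x a ly by simp
      hence "Tr (y ^ 2) = c - aw * l ^ 2" by (metis add_diff_cancel_left')
      thus "x \<in> phi ` (SIGMA l:K. {y\<in>W'. Tr (y ^ 2) = c - aw * l ^ 2})" using a ly by auto
    qed
    show "phi ` (SIGMA l:K. {y\<in>W'. Tr (y ^ 2) = c - aw * l ^ 2}) \<subseteq> {x\<in>W. Tr (x ^ 2) = c}"
    proof
      fix x assume "x \<in> phi ` (SIGMA l:K. {y\<in>W'. Tr (y ^ 2) = c - aw * l ^ 2})"
      then obtain l y where ly: "x = phi (l, y)" "l \<in> K" "y \<in> W'" "Tr (y ^ 2) = c - aw * l ^ 2" by auto
      have "x \<in> W" using phi_bij ly unfolding bij_betw_def by auto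
      moreover have "Tr (x ^ 2) = c" using phi_Q[OF ly(2,3)] ly by simp
      ultimately show "x \<in> {x\<in>W. Tr (x ^ 2) = c}" by simp
    qed
  qed
  moreover have "inj_on phi (SIGMA l:K. {y\<in>W'. Tr (y ^ 2) = c - aw * l ^ 2})"
  proof -
    have "inj_on phi (K \<times> W')" using phi_bij by (simp add: bij_betw_def)
    thus ?thesis by (rule inj_on_subset) auto
  qed
  ultimately have "card {x\<in>W. Tr (x ^ 2) = c} = card (SIGMA l:K. {y\<in>W'. Tr (y ^ 2) = c - aw * l ^ 2})"
    by (simp add: card_image)
  also have "\<dots> = (\<Sum>l\<in>K. card {y\<in>W'. Tr (y ^ 2) = c - aw * l ^ 2})"
    by (rule card_SigmaI) auto
  finally show ?thesis .
qed

end

lemma OD: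
  "subsp W \<Longrightarrow> nondegW W \<Longrightarrow> card W = q ^ d \<Longrightarrow>
   \<exists>ws. length ws = d \<and> set ws \<subseteq> W \<and> (\<forall>v\<in>set ws. Tr (v ^ 2) \<noteq> 0) \<and> orth ws \<and>
        (\<forall>c\<in>K. card {x\<in>W. Tr (x ^ 2) = c} = cnt K (map (\<lambda>v. Tr (v ^ 2)) ws) c)"
proof (induction d arbitrary: W)
  case 0
  hence "0 \<in> W" "card W = 1" unfolding subsp_def by auto
  hence W0: "W = {0}" by (metis card_1_singletonE singletonD)
  have cnt0: "card {x\<in>W. Tr (x ^ 2) = c} = cnt K [] c" for c
  proof (cases "c = 0")
    case True
    hence "{x\<in>W. Tr (x ^ 2) = c} = {0}" using W0 by auto
    thus ?thesis using True by simp
  next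
    case False
    hence "{x\<in>W. Tr (x ^ 2) = c} = {}" using W0 by auto
    thus ?thesis using False by simp
  qed
  show ?case
    by (rule exI[of _ "[]"]) (use cnt0 in \<open>auto simp: orth_def\<close>)
next
  case (Suc d)
  have ne: "\<exists>x\<in>W. x \<noteq> 0"
  proof (rule ccontr)
    assume "\<not> ?thesis"
    hence "W \<subseteq> {0}" by auto
    hence "card W \<le> 1" using card_mono[of "{0}" W] by simp
    moreover have "q ^ Suc d > 1" using one_less_power[OF q_gt1, of "Suc d"] by simp
    ultimately show False using Suc.prems(3) by simp
  qed
  obtain w where w: "w \<in> W" "Tr (w ^ 2) \<noteq> 0" using aniso_exists[OF Suc.prems(1,2) ne] by blast
  note ctx = Suc.prems(1,2) w
  have cW': "card (W' W w) = q ^ d"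
    using card_W'[OF ctx] Suc.prems(3) q_gt1 by simp
  obtain ws where ws: "length ws = d" "set ws \<subseteq> W' W w" "\<forall>v\<in>set ws. Tr (v ^ 2) \<noteq> 0" "orth ws"
      "\<forall>c\<in>K. card {x\<in>W' W w. Tr (x ^ 2) = c} = cnt K (map (\<lambda>v. Tr (v ^ 2)) ws) c"
    using Suc.IH[OF subsp_W'[OF ctx] nondeg_W'[OF ctx] cW'] by blast
  have sub: "W' W w \<subseteq> W" unfolding W'_def[OF ctx] by auto
  have orthw: "Tr (w * v) = 0" "Tr (v * w) = 0" if "v \<in> set ws" for v
    using ws(2) that unfolding W'_def[OF ctx] by (auto simp: mult.commute)
  have "orth (w # ws)"
    unfolding orth_def
  proof (intro allI impI)
    fix i j assume ij: "i < length (w # ws)" "j < length (w # ws)" "i \<noteq> j"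
    show "Tr ((w # ws) ! i * (w # ws) ! j) = 0"
    proof (cases i; cases j)
      fix j' assume "i = 0" "j = Suc j'"
      thus ?thesis using ij orthw by simp
    next
      fix i' assume "i = Suc i'" "j = 0"
      thus ?thesis using ij orthw by simp
    next
      fix i' j' assume "i = Suc i'" "j = Suc j'"
      thus ?thesis using ij ws(4) unfolding orth_def by simp
    qed (use ij in simp)
  qed
  moreover have "\<forall>c\<in>K. card {x\<in>W. Tr (x ^ 2) = c} = cnt K (map (\<lambda>v. Tr (v ^ 2)) (w # ws)) c"
  proof
    fix c assume c: "c \<in> K"
    have "card {x\<in>W. Tr (x ^ 2) = c} = (\<Sum>l\<in>K. card {y\<in>W' W w. Tr (y ^ 2) = c - aw w * l ^ 2})"
      by (rule count_W[OF ctx])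
    also have "\<dots> = (\<Sum>l\<in>K. cnt K (map (\<lambda>v. Tr (v ^ 2)) ws) (c - aw w * l ^ 2))"
    proof (rule sum.cong)
      fix l assume "l \<in> K"
      hence "c - aw w * l ^ 2 \<in> K" using c aw_K[OF ctx] by (auto intro: K_diff K_mult K_pow2)
      thus "card {y\<in>W' W w. Tr (y ^ 2) = c - aw w * l ^ 2} = cnt K (map (\<lambda>v. Tr (v ^ 2)) ws) (c - aw w * l ^ 2)"
        using ws(5) by blast
    qed simp
    also have "\<dots> = cnt K (map (\<lambda>v. Tr (v ^ 2)) (w # ws)) c"
      by (simp add: aw_def[OF ctx])
    finally show "card {x\<in>W. Tr (x ^ 2) = c} = cnt K (map (\<lambda>v. Tr (v ^ 2)) (w # ws)) c" .
  qed
  ultimately show ?case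
    using ws sub w by (intro exI[of _ "w # ws"]) auto
qed

end

definition cyc :: "nat \<Rightarrow> nat \<Rightarrow> nat" where
  "cyc n k = (if k + 1 < n then k + 1 else if k + 1 = n then 0 else k)"

lemma cyc_perm: "n \<ge> 1 \<Longrightarrow> cyc n permutes {0..<n} \<and> evenperm (cyc n) = even (n - 1)"
proof (induction n rule: dec_induct)
  case base
  have "cyc 1 = id" by (rule ext) (simp add: cyc_def)
  moreover have "id permutes {0..<1::nat}" by (rule permutes_id)
  ultimately show ?case using evenperm_id by (metis diff_self_eq_0 even_zero)
next
  case (step n)
  have eq: "cyc (Suc n) = cyc n \<circ> Transposition.transpose (n - 1) n"
    using step(1) by (auto simp: cyc_def fun_eq_iff Transposition.transpose_def)
  have p1: "cyc n permutes {0..<Suc n}" using step(3)[THEN conjunct1] by (rule permutes_subset) auto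
  have p2: "Transposition.transpose (n - 1) n permutes {0..<Suc n}" by (rule permutes_swap_id) auto
  have "cyc (Suc n) permutes {0..<Suc n}" unfolding eq by (rule permutes_compose[OF p2 p1])
  moreover have "evenperm (cyc (Suc n)) = even (Suc n - 1)"
  proof -
    have pp1: "permutation (cyc n)" using step(3)[THEN conjunct1] permutation_permutes by blast
    have pp2: "permutation (Transposition.transpose (n - 1) n)" by (rule permutation_swap_id)
    have "evenperm (cyc (Suc n)) = (evenperm (cyc n) = evenperm (Transposition.transpose (n - 1) n))"
      unfolding eq by (rule evenperm_comp[OF pp1 pp2])
    also have "evenperm (Transposition.transpose (n - 1) n) = False" using step(1) by (simp add: evenperm_swap)
    finally show ?thesis using step(3) step(1) by auto
  qed
  ultimately show ?case by blast
qed

context ffq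
begin

lemma disc_square:
  assumes len: "length ws = m" and o: "orth ws" and nz: "\<forall>v\<in>set ws. Tr (v ^ 2) \<noteq> 0"
    and modd: "odd m"
  shows "\<exists>D\<in>K. prod_list (map (\<lambda>v. Tr (v ^ 2)) ws) = D ^ 2"
proof -
  define M where "M = mat m m (\<lambda>(k, i). (ws ! i) ^ (q ^ k))"
  define G where "G = mat m m (\<lambda>(i, j). if i = j then Tr ((ws ! i) ^ 2) else 0)"
  have Mc: "M \<in> carrier_mat m m" unfolding M_def by simp
  have TM: "transpose_mat M * M = G"
  proof (rule eq_matI)
    fix i j assume ij: "i < dim_row G" "j < dim_col G"
    hence ij': "i < m" "j < m" unfolding G_def by auto
    have "(transpose_mat M * M) $$ (i, j) = (\<Sum>k<m. (ws ! i) ^ (q ^ k) * (ws ! j) ^ (q ^ k))"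
      using ij' unfolding M_def by (simp add: scalar_prod_def atLeast0LessThan)
    also have "\<dots> = Tr (ws ! i * ws ! j)" unfolding trace_qm_def by (simp add: power_mult_distrib)
    also have "\<dots> = G $$ (i, j)"
      using ij' o len unfolding G_def orth_def by (auto simp: power2_eq_square)
    finally show "(transpose_mat M * M) $$ (i, j) = G $$ (i, j)" .
  qed (auto simp: M_def G_def)
  have detG: "det G = prod_list (map (\<lambda>v. Tr (v ^ 2)) ws)"
  proof -
    have "det G = prod_list (diag_mat G)"
      by (rule det_upper_triangular) (auto simp: G_def upper_triangular_def)
    also have "diag_mat G = map (\<lambda>v. Tr (v ^ 2)) ws"
      using len by (auto simp: diag_mat_def G_def intro: nth_equalityI)
    finally show ?thesis .
  qed
  have "det G = det M * det M"
  proof -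
    have MTc: "transpose_mat M \<in> carrier_mat m m" using Mc by simp
    show ?thesis using TM det_mult[OF MTc Mc] det_transpose[OF Mc] by simp
  qed
  hence P: "prod_list (map (\<lambda>v. Tr (v ^ 2)) ws) = (det M) ^ 2" using detG by (simp add: power2_eq_square)
  interpret fr: comm_ring_hom "\<lambda>x::'a. x ^ q"
    by unfold_locales (use q_gt1 frob_add[of _ _ 1] in \<open>simp_all add: power_mult_distrib\<close>)
  have "(det M) ^ q = det (map_mat (\<lambda>x. x ^ q) M)" by simp
  also have "map_mat (\<lambda>x. x ^ q) M = mat m m (\<lambda>(k, i). M $$ (cyc m k, i))"
  proof (rule eq_matI)
    fix k i assume ki: "k < dim_row (mat m m (\<lambda>(k, i). M $$ (cyc m k, i)))"
      "i < dim_col (mat m m (\<lambda>(k, i). M $$ (cyc m k, i)))"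
    hence ki': "k < m" "i < m" by auto
    have cm: "cyc m k < m" using ki' unfolding cyc_def by auto
    have "map_mat (\<lambda>x. x ^ q) M $$ (k, i) = (ws ! i) ^ (q ^ Suc k)"
      using ki' unfolding M_def by (simp add: power_mult[symmetric] mult.commute)
    also have "\<dots> = M $$ (cyc m k, i)"
    proof (cases "k + 1 < m")
      case True thus ?thesis using ki' cm unfolding M_def cyc_def by simp
    next
      case False
      hence "Suc k = m" using ki' by simp
      thus ?thesis using ki' cm pow_card unfolding M_def cyc_def by simp
    qed
    finally show "map_mat (\<lambda>x. x ^ q) M $$ (k, i) = mat m m (\<lambda>(k, i). M $$ (cyc m k, i)) $$ (k, i)"
      using ki' by simp
  qed (auto simp: M_def)
  also have "det (mat m m (\<lambda>(k, i). M $$ (cyc m k, i))) = signof (cyc m) * det M"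
    by (rule det_permute_rows[OF Mc]) (use cyc_perm m_pos in blast)
  also have "signof (cyc m) = (1::'a)"
    using cyc_perm[OF m_pos] modd by (simp add: sign_def)
  finally have "(det M) ^ q = det M" by simp
  hence "det M \<in> K" using K_mem by simp
  thus ?thesis using P by blast
qed

end

context ffq
begin

lemma main_t0:
  assumes b: "b \<noteq> 0" and s: "s \<in> K" "s \<noteq> 0" and t: "Tr (b ^ 2) = 0" and m3: "m \<ge> 3"
  shows "card {x. Tr (b * x) = s \<and> Tr (x ^ 2) = 0} = q ^ (m - 2)"
proof -
  define H where "H = {x. Tr (b * x) = s}"
  define Sol where "Sol = {x. Tr (b * x) = s \<and> Tr (x ^ 2) = 0}"
  define g where "g = (\<lambda>x. x - (Tr (x ^ 2) / (2 * s)) * b)"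
  have two_s: "2 * s \<in> K" "2 * s \<noteq> 0" using s two_nz K_ofnat[of 2] by (auto intro: K_mult)
  have muK: "Tr (x ^ 2) / (2 * s) \<in> K" for x using Tr_in_K two_s K_div by blast
  have gH: "g x \<in> Sol" if x: "x \<in> H" for x
  proof -
    let ?mu = "Tr (x ^ 2) / (2 * s)"
    have e1: "b * g x = b * x + (- ?mu) * b ^ 2" unfolding g_def by (simp add: algebra_simps power2_eq_square)
    have "Tr (b * g x) = Tr (b * x) + (- ?mu) * Tr (b ^ 2)"
      by (subst e1, simp only: Tr_add Tr_scal[OF K_neg[OF muK]])
    hence A: "Tr (b * g x) = s" using x t unfolding H_def by simp
    have "Tr ((g x) ^ 2) = Tr (x ^ 2) + 2 * Tr (x * ((- ?mu) * b)) + Tr (((- ?mu) * b) ^ 2)"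
      unfolding g_def using Q_add[of x "(- ?mu) * b"] by simp
    also have "Tr (x * ((- ?mu) * b)) = (- ?mu) * Tr (b * x)"
    proof -
      have "x * ((- ?mu) * b) = (- ?mu) * (b * x)" by (simp only: mult_ac)
      thus ?thesis by (simp only: Tr_scal[OF K_neg[OF muK]])
    qed
    also have "Tr (((- ?mu) * b) ^ 2) = (- ?mu) ^ 2 * Tr (b ^ 2)"
      by (simp only: power_mult_distrib Tr_scal[OF K_pow2[OF K_neg[OF muK]]])
    finally have "Tr ((g x) ^ 2) = Tr (x ^ 2) - 2 * ?mu * s" using x t unfolding H_def by simp
    also have "\<dots> = 0" using two_s by simp
    finally show ?thesis using A unfolding Sol_def by simp
  qed
  have fib: "card {x\<in>H. g x = z} = q" if z: "z \<in> Sol" for z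
  proof -
    have zs: "Tr (b * z) = s" "Tr (z ^ 2) = 0" using z unfolding Sol_def by auto
    have "{x\<in>H. g x = z} = (\<lambda>l. z + l * b) ` K"
    proof
      show "{x\<in>H. g x = z} \<subseteq> (\<lambda>l. z + l * b) ` K"
      proof
        fix x assume "x \<in> {x\<in>H. g x = z}"
        hence "x = z + (Tr (x ^ 2) / (2 * s)) * b" unfolding g_def by auto
        thus "x \<in> (\<lambda>l. z + l * b) ` K" using muK by blast
      qed
      show "(\<lambda>l. z + l * b) ` K \<subseteq> {x\<in>H. g x = z}"
      proof
        fix x assume "x \<in> (\<lambda>l. z + l * b) ` K"
        then obtain l where l: "l \<in> K" "x = z + l * b" by auto
        have e1: "b * x = b * z + l * b ^ 2" using l by (simp add: algebra_simps power2_eq_square)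
        have "Tr (b * x) = Tr (b * z) + l * Tr (b ^ 2)"
          by (subst e1, simp only: Tr_add Tr_scal[OF l(1)])
        hence xH: "x \<in> H" using zs t unfolding H_def by simp
        have "Tr (x ^ 2) = Tr (z ^ 2) + 2 * Tr (z * (l * b)) + Tr ((l * b) ^ 2)"
          using l Q_add by simp
        also have "Tr (z * (l * b)) = l * Tr (b * z)"
        proof -
          have "z * (l * b) = l * (b * z)" by (simp only: mult_ac)
          thus ?thesis by (simp only: Tr_scal[OF l(1)])
        qed
        also have "Tr ((l * b) ^ 2) = l ^ 2 * Tr (b ^ 2)"
          by (simp only: power_mult_distrib Tr_scal[OF K_pow2[OF l(1)]])
        finally have "Tr (x ^ 2) = 2 * l * s" using zs t by simp
        hence "Tr (x ^ 2) / (2 * s) = l" using two_s by simp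
        hence "g x = z" unfolding g_def using l by simp
        thus "x \<in> {x\<in>H. g x = z}" using xH by simp
      qed
    qed
    moreover have "inj_on (\<lambda>l. z + l * b) K" using b by (auto simp: inj_on_def)
    ultimately show ?thesis using card_image card_K by metis
  qed
  have "card H = (\<Sum>z\<in>Sol. card {x\<in>H. g x = z})"
  proof -
    have "card H = (\<Sum>x\<in>H. 1)" by simp
    also have "\<dots> = (\<Sum>z\<in>Sol. \<Sum>x\<in>{x\<in>H. g x = z}. 1)"
      by (rule sum.group[symmetric]) (use gH in auto)
    finally show ?thesis by simp
  qed
  also have "\<dots> = card Sol * q" using fib by simp
  finally have "q ^ (m - 1) = card Sol * q"
    using card_Tr_b_fiber[OF b s(1)] unfolding H_def by simp
  moreover have "q ^ (m - 1) = q ^ (m - 2) * q"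
  proof -
    have "m - 1 = Suc (m - 2)" using m3 by simp
    thus ?thesis by (simp only: power_Suc2)
  qed
  ultimately show ?thesis unfolding Sol_def using q_gt1 by simp
qed

lemma orth_cons:
  assumes o: "orth ws" and ow: "\<forall>v\<in>set ws. Tr (w * v) = 0"
  shows "orth (w # ws)"
  unfolding orth_def
proof (intro allI impI)
  have orthw: "Tr (w * v) = 0" "Tr (v * w) = 0" if "v \<in> set ws" for v
    using ow that by (auto simp: mult.commute)
  fix i j assume ij: "i < length (w # ws)" "j < length (w # ws)" "i \<noteq> j"
  show "Tr ((w # ws) ! i * (w # ws) ! j) = 0"
  proof (cases i; cases j)
    fix j' assume "i = 0" "j = Suc j'"
    thus ?thesis using ij orthw by simp
  next
    fix i' assume "i = Suc i'" "j = 0"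
    thus ?thesis using ij orthw by simp
  next
    fix i' j' assume "i = Suc i'" "j = Suc j'"
    thus ?thesis using ij o unfolding orth_def by simp
  qed (use ij in simp)
qed

lemma eta_pow: "x \<in> K \<Longrightarrow> eta (x ^ n) = eta x ^ n"
proof (induction n)
  case 0 thus ?case by (simp add: eta_def' issq_def) (metis K_1 power_one)
next
  case (Suc n) thus ?case by (simp add: eta_mult K_pow2)
qed

lemma main_tnz:
  assumes b: "b \<noteq> 0" and s: "s \<in> K" "s \<noteq> 0" and t: "Tr (b ^ 2) \<noteq> 0" and m3: "m \<ge> 3" and modd: "odd m"
  shows "int (card {x. Tr (b * x) = s \<and> Tr (x ^ 2) = 0}) =
         int q ^ (m - 2) - eta (-1) ^ ((m - 1) div 2) * eta (Tr (b ^ 2)) * int q ^ ((m - 3) div 2)"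
proof -
  define t where "t = Tr (b ^ 2)"
  have tK: "t \<in> K" "t \<noteq> 0" using t Tr_in_K unfolding t_def by auto
  have sU: "subsp UNIV" by (simp add: subsp_def)
  have nU: "nondegW UNIV" using nondeg unfolding nondegW_def by blast
  note ctx = sU nU UNIV_I[of b] t
  define W0 where "W0 = W' UNIV b"
  have W0: "W0 = {y. Tr (b * y) = 0}" unfolding W0_def W'_def[OF ctx] by simp
  have cW0: "card W0 = q ^ (m - 1)"
  proof -
    have "q ^ m = q * card W0" using card_W'[OF ctx] cardF unfolding W0_def by simp
    moreover have "q ^ m = q * q ^ (m - 1)" using m3 by (cases m) auto
    ultimately show ?thesis using q_gt1 by simp
  qed
  obtain ws where ws: "length ws = m - 1" "set ws \<subseteq> W0" "\<forall>v\<in>set ws. Tr (v ^ 2) \<noteq> 0" "orth ws"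
      "\<forall>c\<in>K. card {x\<in>W0. Tr (x ^ 2) = c} = cnt K (map (\<lambda>v. Tr (v ^ 2)) ws) c"
    using OD[OF subsp_W'[OF ctx] nondeg_W'[OF ctx], of "m - 1"] cW0 unfolding W0_def by blast
  define c0 where "c0 = - (s ^ 2 / t)"
  have c0: "c0 \<in> K" "c0 \<noteq> 0" unfolding c0_def using s tK by (auto intro: K_neg K_div K_pow2)
  define nu where "nu = s / t"
  have nuK: "nu \<in> K" unfolding nu_def using s tK K_div by blast
  have Sol: "{x. Tr (b * x) = s \<and> Tr (x ^ 2) = 0} = (\<lambda>y. y + nu * b) ` {y\<in>W0. Tr (y ^ 2) = c0}"
  proof
    show "{x. Tr (b * x) = s \<and> Tr (x ^ 2) = 0} \<subseteq> (\<lambda>y. y + nu * b) ` {y\<in>W0. Tr (y ^ 2) = c0}"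
    proof
      fix x assume x: "x \<in> {x. Tr (b * x) = s \<and> Tr (x ^ 2) = 0}"
      define y where "y = x + (- nu) * b"
      have e1: "b * y = b * x + (- nu) * b ^ 2" unfolding y_def by (simp add: algebra_simps power2_eq_square)
      have "Tr (b * y) = Tr (b * x) + (- nu) * t"
        unfolding t_def by (subst e1, simp only: Tr_add Tr_scal[OF K_neg[OF nuK]])
      hence by0: "Tr (b * y) = 0" using x tK unfolding nu_def by simp
      have "Tr (x ^ 2) = Tr (y ^ 2) + 2 * Tr (y * (nu * b)) + Tr ((nu * b) ^ 2)"
        using Q_add[of y "nu * b"] unfolding y_def by simp
      also have "Tr (y * (nu * b)) = nu * Tr (b * y)"
      proof -
        have "y * (nu * b) = nu * (b * y)" by (simp only: mult_ac)
        thus ?thesis by (simp only: Tr_scal[OF nuK])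
      qed
      also have "Tr ((nu * b) ^ 2) = nu ^ 2 * t"
        unfolding t_def by (simp only: power_mult_distrib Tr_scal[OF K_pow2[OF nuK]])
      finally have "Tr (x ^ 2) = Tr (y ^ 2) + 2 * (nu * Tr (b * y)) + nu ^ 2 * t" .
      hence "Tr (y ^ 2) + nu ^ 2 * t = 0" using x by0 by simp
      hence "Tr (y ^ 2) = - (nu ^ 2 * t)" by (simp only: eq_neg_iff_add_eq_0)
      also have "nu ^ 2 * t = s ^ 2 / t" unfolding nu_def using tK by (simp add: power2_eq_square)
      finally have "Tr (y ^ 2) = c0" unfolding c0_def .
      moreover have "x = y + nu * b" unfolding y_def by simp
      ultimately show "x \<in> (\<lambda>y. y + nu * b) ` {y\<in>W0. Tr (y ^ 2) = c0}" using by0 W0 by auto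
    qed
    show "(\<lambda>y. y + nu * b) ` {y\<in>W0. Tr (y ^ 2) = c0} \<subseteq> {x. Tr (b * x) = s \<and> Tr (x ^ 2) = 0}"
    proof
      fix x assume "x \<in> (\<lambda>y. y + nu * b) ` {y\<in>W0. Tr (y ^ 2) = c0}"
      then obtain y where y: "x = y + nu * b" "Tr (b * y) = 0" "Tr (y ^ 2) = c0" using W0 by auto
      have e1: "b * x = b * y + nu * b ^ 2" using y by (simp add: algebra_simps power2_eq_square)
      have "Tr (b * x) = Tr (b * y) + nu * t"
        unfolding t_def by (subst e1, simp only: Tr_add Tr_scal[OF nuK])
      hence A: "Tr (b * x) = s" using y tK unfolding nu_def by simp
      have "Tr (x ^ 2) = Tr (y ^ 2) + 2 * Tr (y * (nu * b)) + Tr ((nu * b) ^ 2)"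
        using Q_add[of y "nu * b"] y by simp
      also have "Tr (y * (nu * b)) = nu * Tr (b * y)"
      proof -
        have "y * (nu * b) = nu * (b * y)" by (simp only: mult_ac)
        thus ?thesis by (simp only: Tr_scal[OF nuK])
      qed
      also have "Tr ((nu * b) ^ 2) = nu ^ 2 * t"
        unfolding t_def by (simp only: power_mult_distrib Tr_scal[OF K_pow2[OF nuK]])
      also have "nu ^ 2 * t = s ^ 2 / t" unfolding nu_def using tK by (simp add: power2_eq_square)
      finally have "Tr (x ^ 2) = 0" using y unfolding c0_def by simp
      thus "x \<in> {x. Tr (b * x) = s \<and> Tr (x ^ 2) = 0}" using A by simp
    qed
  qed
  have "card {x. Tr (b * x) = s \<and> Tr (x ^ 2) = 0} = card {y\<in>W0. Tr (y ^ 2) = c0}"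
    unfolding Sol by (rule card_image) (auto simp: inj_on_def)
  also have "\<dots> = cnt K (map (\<lambda>v. Tr (v ^ 2)) ws) c0" using ws(5) c0 by blast
  finally have N: "card {x. Tr (b * x) = s \<and> Tr (x ^ 2) = 0} = cnt K (map (\<lambda>v. Tr (v ^ 2)) ws) c0" .
  define k where "k = (m - 1) div 2"
  have k: "m - 1 = 2 * k" "k \<ge> 1" "2 * k - 1 = m - 2" "k - 1 = (m - 3) div 2"
    unfolding k_def using m3 modd by (auto elim!: oddE)
  define P where "P = prod_list (map (\<lambda>v. Tr (v ^ 2)) ws)"
  have setK: "set (map (\<lambda>v. Tr (v ^ 2)) ws) \<subseteq> K - {0}" using ws(3) Tr_in_K by auto
  have PK: "P \<in> K" unfolding P_def using setK by (intro prod_list_K) auto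
  have Pnz: "P \<noteq> 0" unfolding P_def using setK by (auto simp: prod_list_zero_iff)
  have cnt: "int (cnt K (map (\<lambda>v. Tr (v ^ 2)) ws) c0) =
     int q ^ (2 * k - 1) + eta ((-1) ^ k * P) * (- 1) * int q ^ (k - 1)"
    using cnt_even[of "map (\<lambda>v. Tr (v ^ 2)) ws" k c0] ws(1) k setK c0 unfolding P_def by simp
  have "orth (b # ws)"
    using orth_cons[OF ws(4)] ws(2) W0 by auto
  then obtain D where D: "D \<in> K" "prod_list (map (\<lambda>v. Tr (v ^ 2)) (b # ws)) = D ^ 2"
    using disc_square[of "b # ws"] ws(1,3) t m3 modd by auto
  hence tP: "t * P = D ^ 2" unfolding P_def t_def by simp
  hence "D \<noteq> 0" using tK Pnz by auto
  hence "eta (t * P) = 1" using tP eta_sq_nz D by simp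
  hence "eta t * eta P = 1" using eta_mult tK PK by simp
  hence etaP: "eta P = eta t" using eta_pm[OF tK(2)] by auto
  have "eta ((-1) ^ k * P) = eta (-1) ^ k * eta t"
    using eta_mult[OF K_pow2[OF K_neg[OF K_1]] PK] eta_pow[OF K_neg[OF K_1]] etaP by simp
  thus ?thesis using N cnt k unfolding t_def by simp
qed

end

lemma parity_aux:
  assumes "odd (p::nat)"
  shows "\<exists>A. p ^ e = 2 * A + 1 \<and> (even A \<longleftrightarrow> even (e * ((p - 1) div 2)))"
proof (induction e)
  case 0 thus ?case by auto
next
  case (Suc e)
  then obtain A where A: "p ^ e = 2 * A + 1" "even A \<longleftrightarrow> even (e * ((p - 1) div 2))" by blast
  obtain u where u: "p = 2 * u + 1" using assms oddE by blast
  have F1: "p ^ Suc e = 2 * (2 * u * A + u + A) + 1" using A(1) u by (simp add: algebra_simps)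
  have pu: "(p - 1) div 2 = u" using u by simp
  have F3: "even (2 * u * A + u + A) \<longleftrightarrow> even (Suc e * u)"
  proof -
    have A2: "even A \<longleftrightarrow> even (e * u)" using A(2) unfolding pu .
    have h1: "even (2 * u * A + u + A) \<longleftrightarrow> (even u \<longleftrightarrow> even A)" by simp
    have h2: "even (Suc e * u) \<longleftrightarrow> (even u \<longleftrightarrow> even (e * u))" by simp
    show ?thesis unfolding h1 h2 A2 ..
  qed
  show ?case
  proof (intro exI conjI)
    show "p ^ Suc e = 2 * (2 * u * A + u + A) + 1" by (rule F1)
    show "even (2 * u * A + u + A) \<longleftrightarrow> even (Suc e * ((p - 1) div 2))" unfolding pu by (rule F3)
  qed
qed

theorem lemma3p17:
  fixes p e m q :: nat and s b :: "'a::{finite,field}"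
  assumes "prime p" and "odd p" and "e \<ge> 1" and "q = p ^ e"
    and "m \<ge> 3" and "odd m"
    and "card (UNIV :: 'a set) = q ^ m"
    and "s \<in> subfield_q q" and "s \<noteq> 0"
    and "b \<noteq> 0"
  defines "l \<equiv> e * (p - 1) * (m + 3) div 4"
    and "N \<equiv> card {x :: 'a. trace_qm q m (b * x) = s \<and> trace_qm q m (x ^ 2) = 0}"
  shows "(trace_qm q m (b ^ 2) = 0 \<longrightarrow> int N = int q ^ (m - 2))
       \<and> (trace_qm q m (b ^ 2) \<noteq> 0 \<longrightarrow>
            int N = int q ^ (m - 2) - (-1) ^ l * eta_q q (trace_qm q m (b ^ 2)) * int q ^ ((m - 3) div 2))"
proof -
  interpret F: ffq p e m q "subfield_q q :: 'a set"
    by unfold_locales (use assms in auto)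
  have sK: "s \<in> subfield_q q" using assms by simp
  have A: "trace_qm q m (b ^ 2) = 0 \<longrightarrow> int N = int q ^ (m - 2)"
    using F.main_t0[OF assms(10) sK assms(9) _ assms(5)] unfolding N_def by simp
  have B: "trace_qm q m (b ^ 2) \<noteq> 0 \<longrightarrow>
            int N = int q ^ (m - 2) - (-1) ^ l * eta_q q (trace_qm q m (b ^ 2)) * int q ^ ((m - 3) div 2)"
  proof
    assume t: "trace_qm q m (b ^ 2) \<noteq> 0"
    define k where "k = (m - 1) div 2"
    define u where "u = (p - 1) div 2"
    have N: "int N = int q ^ (m - 2) - F.eta (-1) ^ k * eta_q q (trace_qm q m (b ^ 2)) * int q ^ ((m - 3) div 2)"
      using F.main_tnz[OF assms(10) sK assms(9) t assms(5,6)] unfolding N_def k_def by simp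
    obtain A where A: "p ^ e = 2 * A + 1" "even A \<longleftrightarrow> even (e * u)"
      using parity_aux[OF assms(2), of e] unfolding u_def by blast
    have "F.hq = A" unfolding F.hq_def using A(1) assms(4) by simp
    hence "F.eta (-1) = (-1) ^ (e * u)" using F.eta_m1 A(2) by (simp add: minus_one_power_iff)
    moreover have "l = e * u * (k + 2)"
    proof -
      have "p - 1 = 2 * u" unfolding u_def using assms(2) by (simp add: odd_pos)
      moreover have "m + 3 = 2 * (k + 2)" unfolding k_def using assms(6) by (auto elim!: oddE)
      ultimately show ?thesis unfolding l_def by (simp add: algebra_simps)
    qed
    ultimately have "(-1) ^ l = F.eta (-1) ^ k"
    proof -
      assume E: "F.eta (-1) = (-1) ^ (e * u)" and L: "l = e * u * (k + 2)"
      have z2: "((-1::int) ^ (e * u)) ^ 2 = 1"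
      proof -
        have "((-1::int) ^ (e * u)) ^ 2 = ((-1) ^ 2) ^ (e * u)" by (simp only: power_mult[symmetric] mult.commute)
        thus ?thesis by simp
      qed
      have "(-1::int) ^ l = ((-1) ^ (e * u)) ^ (k + 2)" unfolding L by (rule power_mult)
      also have "\<dots> = ((-1) ^ (e * u)) ^ k * ((-1) ^ (e * u)) ^ 2" by (rule power_add)
      also have "\<dots> = F.eta (-1) ^ k" using z2 E by simp
      finally show ?thesis .
    qed
    thus "int N = int q ^ (m - 2) - (-1) ^ l * eta_q q (trace_qm q m (b ^ 2)) * int q ^ ((m - 3) div 2)"
      using N by simp
  qed
  show ?thesis using A B by blast
qed

end
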